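(* Let $n>24$, $\epsilon>0$, $L>9$, and $m=Ln$ (assumed to be an integer). Let $v=(v_1,\dots,v_n)$ with $v_i\ge0$ and $\sum_i v_i=1$. Then $$\mathsf P\left\{\mathrm{AST}(v,x)\le L\,n\,\|v\|\,\|p\|\,(1+8\epsilon)+1\right\}\ \ge\ 1-\frac{10}{9}e^{-L\epsilon^2}.$$
   Context: Standing setup: $U$ is a finite set (the key space) with a probability measure $q$; $T=\{1,\dots,n\}$; $h:U\to T$ is an arbitrary function. $p_i=\sum_{u\in h^{-1}(i)}q(u)$ and $\|p\|^2=\sum_{i=1}^n p_i^2$. $U^m$ carries the product measure $q^m$, and $\mathsf P$ denotes probability under $q^m$ for $x=(x_1,\dots,x_m)\in U^m$. $k_i(x)=|\{j: h(x_j)=i\}|$. $\|\cdot\|$ is the euclidean norm. The vector $v$ is a user's access pattern ($v_i$ = fraction of the user's searches directed to slot $i$). $\mathrm{AST}(v,x)$ denotes the average search time of such a user in a hash table with chaining after the keys $x$ have been inserted; in this model it satisfies $\mathrm{AST}(v,x)\le\sum_{i=1}^n v_i\,k_i(x)$. *)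

theory Defs
  imports "HOL-Probability.Probability"
begin

definition slot_prob :: "'a pmf \<Rightarrow> 'a set \<Rightarrow> ('a \<Rightarrow> nat) \<Rightarrow> nat \<Rightarrow> real" where
  "slot_prob q U h i = (\<Sum>u\<in>{u\<in>U. h u = i}. pmf q u)"

definition vnorm :: "nat \<Rightarrow> (nat \<Rightarrow> real) \<Rightarrow> real" where
  "vnorm n w = sqrt (\<Sum>i=1..n. (w i)^2)"

definition slot_count :: "('a \<Rightarrow> nat) \<Rightarrow> nat \<Rightarrow> nat \<Rightarrow> (nat \<Rightarrow> 'a) \<Rightarrow> nat" where
  "slot_count h m i x = card {j. j < m \<and> h (x j) = i}"

text \<open>The product measure q^m on U^m: key sequences as functions on {..<m}.\<close>
definition keys_pmf :: "nat \<Rightarrow> 'a pmf \<Rightarrow> (nat \<Rightarrow> 'a) pmf" where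
  "keys_pmf m q = Pi_pmf {..<m} undefined (\<lambda>_. q)"

end

theory Submission
  imports Defs
begin

lemma vnorm_L2: "vnorm n w = L2_set w {1..n}"
  by (simp add: vnorm_def L2_set_def)

lemma convex_exp_bound:
  fixes y l :: real assumes "0 \<le> y" "y \<le> 1"
  shows "exp (l * y) \<le> 1 + y * (exp l - 1)"
proof -
  have "exp ((1 - y) *\<^sub>R 0 + y *\<^sub>R l) \<le> (1 - y) * exp 0 + y * exp l"
    using assms by (intro convex_onD[OF exp_convex]) auto
  thus ?thesis by (simp add: algebra_simps)
qed

lemma slot_sum:
  fixes v :: "nat \<Rightarrow> real" and x :: "nat \<Rightarrow> 'a"
  assumes "\<forall>j<m. h (x j) \<in> {1..n}"
  shows "(\<Sum>i=1..n. v i * real (slot_count h m i x)) = (\<Sum>j<m. v (h (x j)))"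
proof -
  have "(\<Sum>i=1..n. v i * real (slot_count h m i x)) = (\<Sum>i=1..n. \<Sum>j<m. if h (x j) = i then v i else 0)"
    unfolding slot_count_def
  proof (intro sum.cong refl)
    fix i
    have "{j. j < m \<and> h (x j) = i} = {..<m} \<inter> {j. h (x j) = i}" by auto
    then show "v i * real (card {j. j < m \<and> h (x j) = i}) = (\<Sum>j<m. if h (x j) = i then v i else 0)"
      by (simp add: sum.If_cases)
  qed
  also have "\<dots> = (\<Sum>j<m. \<Sum>i=1..n. if h (x j) = i then v i else 0)"
    by (rule sum.swap)
  also have "\<dots> = (\<Sum>j<m. v (h (x j)))"
    using assms by (intro sum.cong refl) (auto simp: sum.delta')
  finally show ?thesis .
qed

lemma slot_prob_sum:
  assumes "finite U" "\<forall>u\<in>U. h u \<in> {1..n}"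
  shows "(\<Sum>i=1..n. v i * slot_prob q U h i) = (\<Sum>u\<in>U. pmf q u * v (h u))"
proof -
  have "(\<Sum>i=1..n. v i * slot_prob q U h i) = (\<Sum>i=1..n. \<Sum>u\<in>{u\<in>U. h u = i}. pmf q u * v (h u))"
    unfolding slot_prob_def by (simp add: sum_distrib_left mult.commute)
  also have "\<dots> = (\<Sum>u\<in>U. pmf q u * v (h u))"
    using assms by (intro sum.group) auto
  finally show ?thesis .
qed

lemma slot_prob_total:
  assumes "finite U" "set_pmf q \<subseteq> U" "\<forall>u\<in>U. h u \<in> {1..n}"
  shows "(\<Sum>i=1..n. slot_prob q U h i) = 1"
proof -
  have "(\<Sum>i=1..n. slot_prob q U h i) = (\<Sum>i=1..n. 1 * slot_prob q U h i)" by simp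
  also have "\<dots> = (\<Sum>u\<in>U. pmf q u * 1)"
    using slot_prob_sum[OF assms(1,3), of "\<lambda>_. 1" q] by simp
  also have "\<dots> = 1" using assms by (simp add: sum_pmf_eq_1)
  finally show ?thesis .
qed


lemma chernoff_part:
  fixes U :: "'a set" and q :: "'a pmf" and Y :: "'a \<Rightarrow> real"
  assumes "finite U" and "set_pmf q \<subseteq> U"
    and Y01: "\<forall>u\<in>U. 0 \<le> Y u \<and> Y u \<le> 1"
    and EY: "measure_pmf.expectation q Y \<le> P"
    and "l \<ge> 0"
  shows "measure_pmf.prob (keys_pmf m q) {x. (\<Sum>j<m. Y (x j)) > a}
          \<le> exp (real m * P * (exp l - 1) - l * a)"
proof -
  define D where "D = keys_pmf m q"
  have suppD: "set_pmf D \<subseteq> PiE {..<m} (\<lambda>_. U)"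
    using set_Pi_pmf_subset'[of "{..<m}" undefined "\<lambda>_. q"] assms(2)
    unfolding D_def keys_pmf_def PiE_dflt_def by (auto simp: PiE_def extensional_def)
  have finD: "finite (set_pmf D)"
    by (rule finite_subset[OF suppD]) (use assms(1) in \<open>auto intro: finite_PiE\<close>)
  have finq: "finite (set_pmf q)" using assms(1,2) finite_subset by blast
  define Z where "Z x = (\<Sum>j<m. Y (x j))" for x
  have "measure_pmf.prob D {x. Z x > a} = measure_pmf.expectation D (indicator {x. Z x > a})"
    by simp
  also have "\<dots> \<le> measure_pmf.expectation D (\<lambda>x. exp (l * (Z x - a)))"
  proof (intro integral_mono)
    show "integrable (measure_pmf D) (indicator {x. Z x > a} :: _ \<Rightarrow> real)"
      using finD by (rule integrable_measure_pmf_finite)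
    show "integrable (measure_pmf D) (\<lambda>x. exp (l * (Z x - a)))"
      using finD by (rule integrable_measure_pmf_finite)
    fix x
    show "indicator {x. Z x > a} x \<le> exp (l * (Z x - a))"
    proof (cases "Z x > a")
      case True
      then have "0 \<le> l * (Z x - a)" using assms(5) by simp
      then show ?thesis using True by simp
    qed simp
  qed
  also have "\<dots> = measure_pmf.expectation D (\<lambda>x. exp (- l * a) * (\<Prod>j<m. exp (l * Y (x j))))"
    unfolding Z_def by (simp add: exp_sum [symmetric] sum_distrib_left algebra_simps exp_add [symmetric] sum_subtractf)
  also have "\<dots> = exp (- l * a) * measure_pmf.expectation D (\<lambda>x. \<Prod>j<m. exp (l * Y (x j)))"
    by simp
  also have "measure_pmf.expectation D (\<lambda>x. \<Prod>j<m. exp (l * Y (x j)))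
      = (\<Prod>j<m. measure_pmf.expectation q (\<lambda>u. exp (l * Y u)))"
    unfolding D_def keys_pmf_def
    by (rule expectation_prod_Pi_pmf) (auto intro: integrable_measure_pmf_finite[OF finq])
  also have "\<dots> = (measure_pmf.expectation q (\<lambda>u. exp (l * Y u))) ^ m" by simp
  finally have c1: "measure_pmf.prob D {x. Z x > a} \<le> exp (- l * a) * (measure_pmf.expectation q (\<lambda>u. exp (l * Y u))) ^ m" .
  have "measure_pmf.expectation q (\<lambda>u. exp (l * Y u)) \<le> measure_pmf.expectation q (\<lambda>u. 1 + Y u * (exp l - 1))"
    using Y01 assms(2)
    by (intro integral_mono_AE AE_pmfI integrable_measure_pmf_finite[OF finq] convex_exp_bound) auto
  also have "measure_pmf.expectation q (\<lambda>u. 1 + Y u * (exp l - 1)) = 1 + measure_pmf.expectation q Y * (exp l - 1)"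
  proof -
    have "measure_pmf.expectation q (\<lambda>u. 1 + Y u * (exp l - 1)) = measure_pmf.expectation q (\<lambda>u. 1) + measure_pmf.expectation q (\<lambda>u. Y u * (exp l - 1))"
      by (rule Bochner_Integration.integral_add) (auto intro: integrable_measure_pmf_finite[OF finq])
    then show ?thesis by simp
  qed
  also have "\<dots> \<le> exp (P * (exp l - 1))"
  proof -
    have "1 + measure_pmf.expectation q Y * (exp l - 1) \<le> 1 + P * (exp l - 1)"
      using EY assms(5) by (intro add_left_mono mult_right_mono) auto
    also have "\<dots> \<le> exp (P * (exp l - 1))" by (rule exp_ge_add_one_self)
    finally show ?thesis .
  qed
  finally have c2: "measure_pmf.expectation q (\<lambda>u. exp (l * Y u)) \<le> exp (P * (exp l - 1))" .
  have c3: "(measure_pmf.expectation q (\<lambda>u. exp (l * Y u))) ^ m \<le> exp (P * (exp l - 1)) ^ m"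
    by (intro power_mono c2 integral_nonneg_AE AE_pmfI) auto
  have "exp (P * (exp l - 1)) ^ m = exp (real m * P * (exp l - 1))"
    by (simp add: exp_of_nat_mult [symmetric] mult.assoc)
  with c1 c3 have "measure_pmf.prob D {x. Z x > a} \<le> exp (- l * a) * exp (real m * P * (exp l - 1))"
    by (smt (verit) exp_gt_zero mult_left_mono)
  also have "\<dots> = exp (real m * P * (exp l - 1) - l * a)"
    by (simp add: exp_add [symmetric])
  finally show ?thesis unfolding D_def Z_def .
qed


theorem corollary5:
  fixes U :: "'a set" and q :: "'a pmf" and h :: "'a \<Rightarrow> nat"
    and n m :: nat and L \<epsilon> :: real and v :: "nat \<Rightarrow> real"
    and AST :: "(nat \<Rightarrow> real) \<Rightarrow> (nat \<Rightarrow> 'a) \<Rightarrow> real"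
  assumes "finite U" and "set_pmf q \<subseteq> U"
    and "\<forall>u\<in>U. h u \<in> {1..n}"
    and "n > 24" and "\<epsilon> > 0" and "L > 9" and "real m = L * real n"
    and "\<forall>i\<in>{1..n}. v i \<ge> 0" and "(\<Sum>i=1..n. v i) = 1"
    and "\<forall>x\<in>PiE {..<m} (\<lambda>_. U).
           AST v x \<le> (\<Sum>i=1..n. v i * real (slot_count h m i x))"
  shows "measure_pmf.prob (keys_pmf m q)
           {x. AST v x \<le> L * real n * vnorm n v * vnorm n (slot_prob q U h) * (1 + 8 * \<epsilon>) + 1}
         \<ge> 1 - 10 / 9 * exp (- L * \<epsilon>^2)"
proof -
  note fU = assms(1) and sq = assms(2) and hU = assms(3) and vnn = assms(8) and vsum = assms(9)
  define p where "p = slot_prob q U h"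
  define W where "W = vnorm n v"
  define P where "P = vnorm n p"
  define D where "D = keys_pmf m q"
  define Y where "Y u = v (h u) / W" for u
  define Z where "Z x = (\<Sum>j<m. Y (x j))" for x
  define a where "a = real m * P * (1 + 8 * \<epsilon>)"
  define T where "T = L * real n * W * P * (1 + 8 * \<epsilon>) + 1"
  have pnn: "\<forall>i. p i \<ge> 0" unfolding p_def slot_prob_def by (auto intro: sum_nonneg)
  have psum: "(\<Sum>i=1..n. p i) = 1" unfolding p_def using slot_prob_total[OF fU sq hU] .
  have vleW: "v i \<le> W" if "i \<in> {1..n}" for i
  proof -
    have "(v i)^2 \<le> (\<Sum>k=1..n. (v k)^2)"
      using that by (intro member_le_sum) auto
    then have "sqrt ((v i)^2) \<le> W" unfolding W_def vnorm_def by (rule real_sqrt_le_mono)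
    then show ?thesis by simp
  qed
  have Wpos: "W > 0"
  proof (rule ccontr)
    assume "\<not> W > 0"
    then have "\<forall>i\<in>{1..n}. v i = 0" using vleW vnn by force
    then have "(\<Sum>i=1..n. v i) = 0" by simp
    with vsum show False by simp
  qed
  have CS: "(\<Sum>i=1..n. p i * v i) \<le> P * W"
    using L2_set_mult_ineq[of p v "{1..n}"] pnn vnn
    unfolding P_def W_def vnorm_L2 by simp
  have Psqrt: "1 \<le> P * sqrt (real n)"
  proof -
    have "(\<Sum>i=1..n. \<bar>p i\<bar> * \<bar>1\<bar>) \<le> L2_set p {1..n} * L2_set (\<lambda>_. 1::real) {1..n}"
      by (rule L2_set_mult_ineq)
    moreover have "L2_set (\<lambda>_. 1::real) {1..n} = sqrt (real n)" by (simp add: L2_set_def)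
    ultimately show ?thesis using pnn psum unfolding P_def vnorm_L2 by simp
  qed
  have P0: "P \<ge> 0" unfolding P_def vnorm_def by (simp add: sum_nonneg)
  have Ppos: "P > 0" using Psqrt P0 by (cases "P = 0") auto
  have n1: "sqrt (real n) \<ge> 1" using assms(4) by simp
  have nP1: "real n * P \<ge> 1"
  proof -
    have "sqrt (real n) * (P * sqrt (real n)) = (sqrt (real n) * sqrt (real n)) * P" by (simp only: mult_ac)
    then have "real n * P = sqrt (real n) * (P * sqrt (real n))" by simp
    also have "\<dots> \<ge> 1 * 1" using n1 Psqrt by (intro mult_mono) auto
    finally show ?thesis by simp
  qed
  have nPP: "real n * P * P \<ge> 1"
  proof -
    have "(P * sqrt (real n)) * (P * sqrt (real n)) = (sqrt (real n) * sqrt (real n)) * P * P" by (simp only: mult_ac)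
    then have "real n * P * P = (P * sqrt (real n)) * (P * sqrt (real n))" by simp
    also have "\<dots> \<ge> 1 * 1" using Psqrt by (intro mult_mono) auto
    finally show ?thesis by simp
  qed
  have Y01: "\<forall>u\<in>U. 0 \<le> Y u \<and> Y u \<le> 1"
    using hU vnn vleW Wpos unfolding Y_def by auto
  have finq: "finite (set_pmf q)" using fU sq finite_subset by blast
  have EY: "measure_pmf.expectation q Y \<le> P"
  proof -
    have "measure_pmf.expectation q Y = (\<Sum>u\<in>U. pmf q u *\<^sub>R Y u)"
      using sq by (intro integral_measure_pmf fU) auto
    also have "\<dots> = (\<Sum>u\<in>U. pmf q u * v (h u)) / W"
      unfolding Y_def by (simp add: sum_divide_distrib)
    also have "\<dots> = (\<Sum>i=1..n. v i * p i) / W"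
      unfolding p_def using slot_prob_sum[OF fU hU, of v q] by simp
    also have "\<dots> \<le> P * W / W"
      using CS Wpos by (intro divide_right_mono) (auto simp: mult.commute)
    finally show ?thesis using Wpos by simp
  qed
  have chern: "measure_pmf.prob D {x. Z x > a} \<le> exp (real m * P * (exp l - 1) - l * a)" if "l \<ge> 0" for l
    unfolding D_def Z_def by (rule chernoff_part[OF fU sq Y01 EY that])
  have suppD: "set_pmf D \<subseteq> PiE {..<m} (\<lambda>_. U)"
    using set_Pi_pmf_subset'[of "{..<m}" undefined "\<lambda>_. q"] sq
    unfolding D_def keys_pmf_def PiE_dflt_def by (auto simp: PiE_def extensional_def)
  have ZW: "(\<Sum>i=1..n. v i * real (slot_count h m i x)) = W * Z x" if "x \<in> set_pmf D" for x
  proof -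
    have "\<forall>j<m. h (x j) \<in> {1..n}" using suppD that hU by (auto simp: PiE_def)
    then have "(\<Sum>i=1..n. v i * real (slot_count h m i x)) = (\<Sum>j<m. v (h (x j)))" by (rule slot_sum)
    also have "\<dots> = W * Z x" unfolding Z_def Y_def using Wpos by (simp add: sum_distrib_left)
    finally show ?thesis .
  qed
  have Zm: "Z x \<le> real m" if "x \<in> set_pmf D" for x
  proof -
    have "Z x \<le> (\<Sum>j<m. 1)" unfolding Z_def
      using suppD that Y01 by (intro sum_mono) (auto simp: PiE_def)
    then show ?thesis by simp
  qed
  define bad where "bad = {x. \<not> AST v x \<le> T}"
  have badsub: "bad \<inter> set_pmf D \<subseteq> {x. Z x > a}"
  proof
    fix x assume x: "x \<in> bad \<inter> set_pmf D"
    have xD: "x \<in> set_pmf D" using x by simp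
    have "AST v x \<le> (\<Sum>i=1..n. v i * real (slot_count h m i x))" using assms(10) suppD xD by blast
    also have "\<dots> = W * Z x" using ZW[OF xD] .
    finally have "AST v x \<le> W * Z x" .
    show "x \<in> {x. Z x > a}"
    proof (rule ccontr)
      assume "x \<notin> {x. Z x > a}"
      then have "Z x \<le> a" by simp
      then have "W * Z x \<le> W * a" using Wpos by (intro mult_left_mono) auto
      also have "W * a = T - 1" unfolding a_def T_def using assms(7) by (simp add: algebra_simps)
      finally have "AST v x \<le> T" using \<open>AST v x \<le> W * Z x\<close> by simp
      with x show False unfolding bad_def by simp
    qed
  qed
  have pbad: "measure_pmf.prob D bad \<le> measure_pmf.prob D {x. Z x > a}"
  proof -
    have "measure_pmf.prob D bad = measure_pmf.prob D (bad \<inter> set_pmf D)"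
      by (simp add: measure_Int_set_pmf)
    also have "\<dots> \<le> measure_pmf.prob D {x. Z x > a}"
      using badsub by (intro measure_pmf.finite_measure_mono) auto
    finally show ?thesis .
  qed
  have main: "measure_pmf.prob D {x. Z x > a} \<le> exp (- L * \<epsilon>^2)"
  proof (cases "\<epsilon> \<le> 1/4")
    case True
    have "exp (4 * \<epsilon>) \<le> 1 + 4 * \<epsilon> + (4 * \<epsilon>)^2"
      using True assms(5) by (intro exp_bound) auto
    then have "real m * P * (exp (4 * \<epsilon>) - 1) - 4 * \<epsilon> * a \<le> real m * P * (4 * \<epsilon> + (4 * \<epsilon>)^2) - 4 * \<epsilon> * a"
      using Ppos by (intro diff_right_mono mult_left_mono) auto
    also have "\<dots> = - 16 * (real m * P) * \<epsilon>^2" unfolding a_def by (simp add: algebra_simps power2_eq_square)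
    also have "\<dots> \<le> - L * \<epsilon>^2"
    proof -
      have "real m * P = L * (real n * P)" using assms(7) by simp
      also have "\<dots> \<ge> L * 1" using nP1 assms(6) by (intro mult_left_mono) auto
      finally have "real m * P \<ge> L" by simp
      then have "L * \<epsilon>^2 \<le> (real m * P) * \<epsilon>^2" by (intro mult_right_mono) auto
      moreover have "(real m * P) * \<epsilon>^2 \<ge> 0" using Ppos by simp
      ultimately show ?thesis by linarith
    qed
    finally have "real m * P * (exp (4 * \<epsilon>) - 1) - 4 * \<epsilon> * a \<le> - L * \<epsilon>^2" .
    then have "exp (real m * P * (exp (4 * \<epsilon>) - 1) - 4 * \<epsilon> * a) \<le> exp (- L * \<epsilon>^2)" by simp
    then show ?thesis using chern[of "4 * \<epsilon>"] assms(5) by linarith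
  next
    case False
    show ?thesis
    proof (cases "P * (1 + 8 * \<epsilon>) \<ge> 1")
      case True
      have "real m * 1 \<le> real m * (P * (1 + 8 * \<epsilon>))" using True by (intro mult_left_mono) auto
      then have "real m \<le> a" by (simp add: a_def mult.assoc)
      then have "set_pmf D \<inter> {x. Z x > a} = {}" using Zm by force
      then have "measure_pmf.prob D {x. Z x > a} = 0" by (simp add: measure_pmf_zero_iff)
      then show ?thesis by simp
    next
      case False2: False
      have "exp (1::real) \<le> 3" by (rule exp_le)
      then have "real m * P * (exp 1 - 1) - 1 * a \<le> real m * P * 2 - a"
      proof -
        have "real m * P * (exp 1 - 1) \<le> real m * P * 2"
          using Ppos \<open>exp (1::real) \<le> 3\<close> by (intro mult_left_mono) auto
        then show ?thesis by simp
      qed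
      also have "\<dots> = real m * P * (1 - 8 * \<epsilon>)" unfolding a_def by (simp add: algebra_simps)
      also have "\<dots> \<le> real m * P * (- 4 * \<epsilon>)"
        using False Ppos by (intro mult_left_mono) auto
      also have "\<dots> \<le> - L * \<epsilon>^2"
      proof -
        have "real n * P \<ge> 1 / P" using nPP Ppos by (simp add: field_simps)
        moreover have "1 / P > 1 + 8 * \<epsilon>" using False2 Ppos by (simp add: field_simps)
        ultimately have "real n * P \<ge> \<epsilon> / 4" using assms(5) by linarith
        then have "L * (real n * P) \<ge> L * (\<epsilon> / 4)" using assms(6) by (intro mult_left_mono) auto
        then have "real m * P \<ge> L * \<epsilon> / 4" using assms(7) by simp
        then have "real m * P * (4 * \<epsilon>) \<ge> L * \<epsilon> / 4 * (4 * \<epsilon>)" using assms(5) by (intro mult_right_mono) auto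
        then show ?thesis by (simp add: power2_eq_square algebra_simps)
      qed
      finally have "real m * P * (exp 1 - 1) - 1 * a \<le> - L * \<epsilon>^2" .
      then have "exp (real m * P * (exp 1 - 1) - 1 * a) \<le> exp (- L * \<epsilon>^2)" by simp
      then show ?thesis using chern[of 1] by linarith
    qed
  qed
  have "UNIV - bad = {x. AST v x \<le> T}" unfolding bad_def by auto
  moreover have "measure_pmf.prob D (UNIV - bad) = 1 - measure_pmf.prob D bad"
    using measure_pmf.prob_compl[of bad D] by simp
  ultimately have "measure_pmf.prob D {x. AST v x \<le> T} = 1 - measure_pmf.prob D bad" by simp
  moreover have "exp (- L * \<epsilon>^2) \<le> 10 / 9 * exp (- L * \<epsilon>^2)" by simp
  ultimately have "measure_pmf.prob D {x. AST v x \<le> T} \<ge> 1 - 10 / 9 * exp (- L * \<epsilon>^2)"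
    using pbad main by linarith
  then show ?thesis unfolding D_def T_def W_def P_def p_def .
qed

end
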